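(* Let $f:\mathbb{S}^3\to\mathbb{S}^3$ be a smooth map and for $g\in\mathbb{S}^3$ let $M_g:\mathrm{Im}\,\mathbb{H}\to\mathrm{Im}\,\mathbb{H}$, $M_g(x)=f_*(gx)f(g)^{-1}$. Then $M_g$ is symmetric (with respect to the Euclidean scalar product on $\mathrm{Im}\,\mathbb{H}$) for all $g\in\mathbb{S}^3$ if and only if the graph $\Gamma_{f^{-1}}=\{(g,f(g)^{-1}):g\in\mathbb{S}^3\}$ is a Lagrangian submanifold of $S^3\times S^3$ with respect to the $2$-form $\Omega$.
   Context: $S^3$ is the group of unit quaternions, with Lie algebra $\mathfrak{su}(2)\cong\mathrm{Im}\,\mathbb{H}$ and $\mathrm{T}_g S^3=g\,\mathrm{Im}\,\mathbb{H}$. Let $\langle\cdot,\cdot\rangle:=-\tfrac1{12}B$ on $\mathfrak{su}(2)$, where $B$ is the Killing form (equivalently $\langle x,y\rangle=\tfrac23\,\mathrm{Re}(x\bar y)$). The nearly Kähler structure on $S^3\times S^3$ (identified with $S^3\times S^3\times S^3/\Delta S^3$ via $(g_1,g_2,g_3)\cdot(a_1,a_2)=(g_1a_1g_3^{-1},g_2a_2g_3^{-1})$) has fundamental $2$-form given at a point $(g_1,g_2)$ on tangent vectors $(X_1,X_2),(Y_1,Y_2)$ by $\Omega((X_1,X_2),(Y_1,Y_2))=\tfrac1{\sqrt3}\big(\langle g_1^{-1}X_1,g_2^{-1}Y_2\rangle-\langle g_2^{-1}X_2,g_1^{-1}Y_1\rangle\big)$. A $3$-dimensional submanifold $L\subset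 S^3\times S^3$ is called Lagrangian if $\Omega(A,B)=0$ for all $A,B\in\mathrm{T}L$ (note $\Omega$ is not closed). *)

theory Defs
  imports "HOL-Analysis.Analysis"
begin

text \<open>Quaternions H = R^4, represented as real \<times> real \<times> real \<times> real
  (components: real part, i, j, k).  The Euclidean inner product of this
  product type is Re(x * cnj y).\<close>

type_synonym quat = "real \<times> real \<times> real \<times> real"

fun qmult :: "quat \<Rightarrow> quat \<Rightarrow> quat" where
  "qmult (a1, b1, c1, d1) (a2, b2, c2, d2) =
     (a1*a2 - b1*b2 - c1*c2 - d1*d2,
      a1*b2 + b1*a2 + c1*d2 - d1*c2,
      a1*c2 - b1*d2 + c1*a2 + d1*b2,
      a1*d2 + b1*c2 - c1*b2 + d1*a2)"

fun qcnj :: "quat \<Rightarrow> quat" where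
  "qcnj (a, b, c, d) = (a, -b, -c, -d)"

definition qinv :: "quat \<Rightarrow> quat" where
  "qinv q = (1 / (norm q)\<^sup>2) *\<^sub>R qcnj q"

definition S3 :: "quat set" where
  "S3 = sphere 0 1"

definition ImH :: "quat set" where
  "ImH = {q. fst q = 0}"

text \<open>The metric <x,y> = -1/12 B(x,y) = 2/3 Re(x * cnj y) on su(2).\<close>

definition su2_inner :: "quat \<Rightarrow> quat \<Rightarrow> real" where
  "su2_inner x y = 2/3 * (x \<bullet> y)"

text \<open>The fundamental 2-form of the nearly Kaehler S^3 x S^3 at the point p = (g1,g2).\<close>

definition Omega :: "quat \<times> quat \<Rightarrow> quat \<times> quat \<Rightarrow> quat \<times> quat \<Rightarrow> real" where
  "Omega p X Y =
     1 / sqrt 3 * (su2_inner (qmult (qinv (fst p)) (fst X)) (qmult (qinv (snd p)) (snd Y))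
                 - su2_inner (qmult (qinv (snd p)) (snd X)) (qmult (qinv (fst p)) (fst Y)))"

definition tangent_space :: "('a::real_normed_vector) set \<Rightarrow> 'a \<Rightarrow> 'a set" where
  "tangent_space L p = {v. \<exists>\<gamma> e. e > 0 \<and> \<gamma> 0 = p \<and> (\<forall>t\<in>{-e<..<e}. \<gamma> t \<in> L)
                               \<and> (\<gamma> has_vector_derivative v) (at 0)}"

definition lagrangian :: "(quat \<times> quat) set \<Rightarrow> bool" where
  "lagrangian L \<longleftrightarrow>
     (\<forall>p\<in>L. \<forall>A\<in>tangent_space L p. \<forall>B\<in>tangent_space L p. Omega p A B = 0)"

fun ddiff :: "('a::real_normed_vector \<Rightarrow> 'b::real_normed_vector) \<Rightarrow> 'a list \<Rightarrow> 'a \<Rightarrow> 'b" where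
  "ddiff F [] = F"
| "ddiff F (v # vs) = (\<lambda>x. vector_derivative (\<lambda>t. ddiff F vs (x + t *\<^sub>R v)) (at 0))"

definition smooth_on :: "'a::real_normed_vector set \<Rightarrow> ('a \<Rightarrow> 'b::real_normed_vector) \<Rightarrow> bool" where
  "smooth_on U F \<longleftrightarrow> open U \<and>
     (\<forall>vs. continuous_on U (ddiff F vs) \<and>
        (\<forall>v. \<forall>x\<in>U. (\<lambda>t. ddiff F vs (x + t *\<^sub>R v)) differentiable (at 0)))"

text \<open>A smooth map f : S^3 \<rightarrow> S^3 is the restriction of a smooth map F defined on an
  open neighbourhood U of S^3 with F(S^3) \<subseteq> S^3.  Its differential at g is the
  Frechet derivative of F at g restricted to T_g S^3 = g Im H.\<close>

definition Mg :: "(quat \<Rightarrow> quat) \<Rightarrow> quat \<Rightarrow> quat \<Rightarrow> quat" where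
  "Mg F g x = qmult (frechet_derivative F (at g) (qmult g x)) (qinv (F g))"

definition graph_inv :: "(quat \<Rightarrow> quat) \<Rightarrow> (quat \<times> quat) set" where
  "graph_inv F = (\<lambda>g. (g, qinv (F g))) ` S3"

end

theory Submission
  imports Defs
begin



lemma seg_bound:
  fixes F :: "'a::real_normed_vector \<Rightarrow> 'b::real_normed_vector"
  assumes der: "\<And>y. y\<in>ball x \<delta> \<Longrightarrow> ((\<lambda>t. F (y + t *\<^sub>R v)) has_vector_derivative D y) (at 0)"
    and bnd: "\<And>y. y\<in>ball x \<delta> \<Longrightarrow> norm (D y - D x) \<le> \<epsilon>"
    and p: "p \<in> ball x \<delta>" and ps: "p + s *\<^sub>R v \<in> ball x \<delta>"
  shows "norm (F (p + s *\<^sub>R v) - F p - s *\<^sub>R D x) \<le> \<epsilon> * \<bar>s\<bar>"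
proof -
  let ?S = "closed_segment 0 s"
  have inS: "p + t *\<^sub>R v \<in> ball x \<delta>" if "t \<in> ?S" for t
  proof -
    have "\<exists>u. t = (1 - u) *\<^sub>R 0 + u *\<^sub>R s \<and> 0 \<le> u \<and> u \<le> 1"
      using that unfolding closed_segment_def mem_Collect_eq .
    then obtain u where u0: "t = (1 - u) *\<^sub>R 0 + u *\<^sub>R s" "0 \<le> u" "u \<le> 1"
      by (elim exE conjE)
    then have u: "0 \<le> u" "u \<le> 1" "t = u * s" by simp_all
    have "p + t *\<^sub>R v = (1 - u) *\<^sub>R p + u *\<^sub>R (p + s *\<^sub>R v)"
      using u by (simp add: scaleR_diff_left scaleR_add_right)
    also have "\<dots> \<in> ball x \<delta>"
      by (rule convexD[OF convex_ball p ps]) (use u in auto)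
    finally show ?thesis .
  qed
  have derg: "((\<lambda>t. F (p + t *\<^sub>R v) - t *\<^sub>R D x) has_derivative (\<lambda>u. u *\<^sub>R (D (p + t *\<^sub>R v) - D x))) (at t within ?S)"
    if "t \<in> ?S" for t
  proof -
    have d1: "((\<lambda>u. F ((p + t *\<^sub>R v) + u *\<^sub>R v)) has_vector_derivative D (p + t *\<^sub>R v)) (at 0)"
      by (rule der) (rule inS[OF that])
    have d2: "((\<lambda>r. r - t) has_vector_derivative 1) (at t)"
      unfolding has_vector_derivative_def
      using has_derivative_diff[OF has_derivative_ident has_derivative_const[of t "at t"]] by simp
    have "(((\<lambda>u. F ((p + t *\<^sub>R v) + u *\<^sub>R v)) \<circ> (\<lambda>r. r - t)) has_vector_derivative (1 *\<^sub>R D (p + t *\<^sub>R v))) (at t)"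
      by (rule vector_diff_chain_at[OF d2]) (simp add: d1)
    moreover have "((\<lambda>u. F ((p + t *\<^sub>R v) + u *\<^sub>R v)) \<circ> (\<lambda>r. r - t)) = (\<lambda>r. F (p + r *\<^sub>R v))"
    proof
      fix r
      have "(p + t *\<^sub>R v) + (r - t) *\<^sub>R v = p + r *\<^sub>R v" by (simp add: scaleR_diff_left)
      then show "((\<lambda>u. F ((p + t *\<^sub>R v) + u *\<^sub>R v)) \<circ> (\<lambda>r. r - t)) r = F (p + r *\<^sub>R v)"
        by (simp only: comp_def)
    qed
    ultimately have "((\<lambda>r. F (p + r *\<^sub>R v)) has_derivative (\<lambda>h. h *\<^sub>R D (p + t *\<^sub>R v))) (at t)"
      by (simp add: has_vector_derivative_def)
    moreover have "((\<lambda>r. r *\<^sub>R D x) has_derivative (\<lambda>h. h *\<^sub>R D x)) (at t)"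
      by (rule bounded_linear_imp_has_derivative[OF bounded_linear_scaleR_left])
    ultimately have "((\<lambda>r. F (p + r *\<^sub>R v) - r *\<^sub>R D x) has_derivative (\<lambda>h. h *\<^sub>R D (p + t *\<^sub>R v) - h *\<^sub>R D x)) (at t)"
      by (rule has_derivative_diff)
    then have "((\<lambda>r. F (p + r *\<^sub>R v) - r *\<^sub>R D x) has_derivative (\<lambda>h. h *\<^sub>R (D (p + t *\<^sub>R v) - D x))) (at t)"
      by (simp add: scaleR_diff_right)
    then show ?thesis
      by (rule has_derivative_at_withinI)
  qed
  have "norm ((F (p + s *\<^sub>R v) - s *\<^sub>R D x) - (F (p + 0 *\<^sub>R v) - 0 *\<^sub>R D x)) \<le> \<epsilon> * norm (s - 0)"
  proof (rule differentiable_bound[where f = "\<lambda>t. F (p + t *\<^sub>R v) - t *\<^sub>R D x", OF convex_closed_segment derg])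
    fix t assume "t \<in> ?S"
    then show "onorm (\<lambda>u. u *\<^sub>R (D (p + t *\<^sub>R v) - D x)) \<le> \<epsilon>"
      using bnd inS by (simp add: onorm_scaleR_left onorm_id)
  qed auto
  then show ?thesis by (simp add: algebra_simps)
qed




lemma norm_quat: "norm ((a,b,c,d)::quat) = sqrt (a\<^sup>2 + b\<^sup>2 + c\<^sup>2 + d\<^sup>2)"
  by (simp add: norm_Pair add.assoc)

definition qlin :: "(quat \<Rightarrow> quat \<Rightarrow> 'b::real_normed_vector) \<Rightarrow> quat \<Rightarrow> quat \<Rightarrow> 'b" where
  "qlin D x h = fst h *\<^sub>R D x (1,0,0,0) + fst (snd h) *\<^sub>R D x (0,1,0,0)
     + fst (snd (snd h)) *\<^sub>R D x (0,0,1,0) + snd (snd (snd h)) *\<^sub>R D x (0,0,0,1)"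

lemma bounded_linear_qlin: "bounded_linear (qlin D x)"
proof -
  have b1: "bounded_linear (\<lambda>h::quat. fst h *\<^sub>R u)" for u :: "'b::real_normed_vector"
    by (rule bounded_linear_compose[OF bounded_linear_scaleR_left bounded_linear_fst])
  have b2: "bounded_linear (\<lambda>h::quat. fst (snd h) *\<^sub>R u)" for u :: "'b::real_normed_vector"
    by (rule bounded_linear_compose[OF bounded_linear_scaleR_left
          bounded_linear_compose[OF bounded_linear_fst bounded_linear_snd]])
  have b3: "bounded_linear (\<lambda>h::quat. fst (snd (snd h)) *\<^sub>R u)" for u :: "'b::real_normed_vector"
    by (rule bounded_linear_compose[OF bounded_linear_scaleR_left
          bounded_linear_compose[OF bounded_linear_fst
          bounded_linear_compose[OF bounded_linear_snd bounded_linear_snd]]])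
  have b4: "bounded_linear (\<lambda>h::quat. snd (snd (snd h)) *\<^sub>R u)" for u :: "'b::real_normed_vector"
    by (rule bounded_linear_compose[OF bounded_linear_scaleR_left
          bounded_linear_compose[OF bounded_linear_snd
          bounded_linear_compose[OF bounded_linear_snd bounded_linear_snd]]])
  show ?thesis unfolding qlin_def[abs_def]
    by (intro bounded_linear_add b1 b2 b3 b4)
qed

lemma L1: fixes F :: "quat \<Rightarrow> 'b::real_normed_vector"
  shows "F y - F x - (a *\<^sub>R u1 + b *\<^sub>R u2 + c *\<^sub>R u3 + dd *\<^sub>R u4) =
        (F y - F p3 - a *\<^sub>R u1) + (F p3 - F p2 - b *\<^sub>R u2)
      + (F p2 - F p1 - c *\<^sub>R u3) + (F p1 - F x - dd *\<^sub>R u4)"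
  by (simp add: algebra_simps)

lemma frechet_quat:
  fixes F :: "quat \<Rightarrow> 'b::real_normed_vector"
  assumes U: "open U" "x \<in> U"
    and der: "\<And>y v. y \<in> U \<Longrightarrow> ((\<lambda>t. F (y + t *\<^sub>R v)) has_vector_derivative D y v) (at 0)"
    and cont: "\<And>v. continuous_on U (\<lambda>y. D y v)"
  shows "(F has_derivative qlin D x) (at x)"
  unfolding has_derivative_at_alt
proof (intro conjI allI impI bounded_linear_qlin)
  fix e :: real assume e: "e > 0"
  have ic: "isCont (\<lambda>y. D y v) x" for v
    using cont U continuous_on_eq_continuous_at by blast
  have "\<exists>d>0. \<forall>y. dist y x < d \<longrightarrow> norm (D y v - D x v) \<le> e/4" for v
  proof -
    have e4: "e/4 > 0" using e by simp
    have "\<exists>d>0. \<forall>y. dist y x < d \<longrightarrow> dist (D y v) (D x v) < e/4"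
      by (rule ic[of v, unfolded continuous_at_eps_delta, rule_format, OF e4])
    then obtain d where d: "d > 0" "\<And>y. dist y x < d \<Longrightarrow> dist (D y v) (D x v) < e/4"
      by blast
    have "\<forall>y. dist y x < d \<longrightarrow> norm (D y v - D x v) \<le> e/4"
    proof (intro allI impI)
      fix y assume "dist y x < d"
      then have "dist (D y v) (D x v) < e/4" by (rule d(2))
      then show "norm (D y v - D x v) \<le> e/4" by (simp add: dist_norm)
    qed
    then show ?thesis using d(1) by blast
  qed
  note ex = this
  obtain d1 where d1: "d1 > 0" "\<forall>y. dist y x < d1 \<longrightarrow> norm (D y (1,0,0,0) - D x (1,0,0,0)) \<le> e/4"
    using ex[of "(1,0,0,0)"] by blast
  obtain d2 where d2: "d2 > 0" "\<forall>y. dist y x < d2 \<longrightarrow> norm (D y (0,1,0,0) - D x (0,1,0,0)) \<le> e/4"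
    using ex[of "(0,1,0,0)"] by blast
  obtain d3 where d3: "d3 > 0" "\<forall>y. dist y x < d3 \<longrightarrow> norm (D y (0,0,1,0) - D x (0,0,1,0)) \<le> e/4"
    using ex[of "(0,0,1,0)"] by blast
  obtain d4 where d4: "d4 > 0" "\<forall>y. dist y x < d4 \<longrightarrow> norm (D y (0,0,0,1) - D x (0,0,0,1)) \<le> e/4"
    using ex[of "(0,0,0,1)"] by blast
  note d = d1 d2 d3 d4
  obtain d0 where d0: "d0 > 0" "ball x d0 \<subseteq> U" using U open_contains_ball by blast
  define \<delta> where "\<delta> = min d0 (min d1 (min d2 (min d3 d4)))"
  have \<delta>: "\<delta> > 0" "\<delta> \<le> d0" "\<delta> \<le> d1" "\<delta> \<le> d2" "\<delta> \<le> d3" "\<delta> \<le> d4"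
    using d d0 unfolding \<delta>_def by linarith+
  have derb: "\<And>y. y \<in> ball x \<delta> \<Longrightarrow> ((\<lambda>t. F (y + t *\<^sub>R v)) has_vector_derivative D y v) (at 0)" for v
    using der d0(2) \<delta>(2) by (meson mem_ball less_le_trans subsetD)
  have bnd: "\<And>y. y \<in> ball x \<delta> \<Longrightarrow> norm (D y v - D x v) \<le> e/4"
    if "v \<in> {(1,0,0,0), (0,1,0,0), (0,0,1,0), (0,0,0,1)}" for v
  proof -
    fix y assume yb: "y \<in> ball x \<delta>"
    have y1: "dist y x < d1" "dist y x < d2" "dist y x < d3" "dist y x < d4"
      using yb \<delta> by (auto simp: dist_commute)
    note z = d1(2)[rule_format, OF y1(1)] d2(2)[rule_format, OF y1(2)]
      d3(2)[rule_format, OF y1(3)] d4(2)[rule_format, OF y1(4)]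
    from that show "norm (D y v - D x v) \<le> e/4"
      by (elim insertE emptyE) (simp_all only: z)
  qed
  show "\<exists>d>0. \<forall>y. norm (y - x) < d \<longrightarrow> norm (F y - F x - qlin D x (y - x)) \<le> e * norm (y - x)"
  proof (intro exI[of _ \<delta>] conjI allI impI \<delta>(1))
    fix y assume y: "norm (y - x) < \<delta>"
    obtain x1 x2 x3 x4 where xq: "x = (x1,x2,x3,x4)" by (cases x) auto
    obtain a b c dd where h: "y - x = (a, b, c, dd)" by (cases "y - x") auto
    have yq: "y = (x1+a, x2+b, x3+c, x4+dd)"
    proof -
      have "y = (y - x) + x" by simp
      also have "\<dots> = (x1+a, x2+b, x3+c, x4+dd)" by (subst h) (simp add: xq add.commute)
      finally show ?thesis .
    qed
    have nh: "norm (y - x) = sqrt (a\<^sup>2 + b\<^sup>2 + c\<^sup>2 + dd\<^sup>2)" unfolding h by (rule norm_quat)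
    define p1 where "p1 = (x1, x2, x3, x4 + dd)"
    define p2 where "p2 = (x1, x2, x3 + c, x4 + dd)"
    define p3 where "p3 = (x1, x2 + b, x3 + c, x4 + dd)"
    have e1: "p1 = x + dd *\<^sub>R (0,0,0,1)" unfolding p1_def xq by simp
    have e2: "p2 = p1 + c *\<^sub>R (0,0,1,0)" unfolding p1_def p2_def by simp
    have e3: "p3 = p2 + b *\<^sub>R (0,1,0,0)" unfolding p3_def p2_def by simp
    have e4: "y = p3 + a *\<^sub>R (1,0,0,0)" unfolding p3_def yq by simp
    have inb: "(x1 + a', x2 + b', x3 + c', x4 + d') \<in> ball x \<delta>"
      if "a'\<^sup>2 + b'\<^sup>2 + c'\<^sup>2 + d'\<^sup>2 \<le> a\<^sup>2 + b\<^sup>2 + c\<^sup>2 + dd\<^sup>2" for a' b' c' d'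
    proof -
      have "norm ((a', b', c', d')::quat) \<le> norm (y - x)"
        unfolding nh norm_quat using that by (rule real_sqrt_le_mono)
      moreover have "dist x (x1 + a', x2 + b', x3 + c', x4 + d') = norm ((a', b', c', d')::quat)"
        unfolding xq dist_norm by (simp add: norm_quat)
      ultimately show ?thesis using y by simp
    qed
    have xb: "x \<in> ball x \<delta>" using \<delta> by simp
    have p1b: "p1 \<in> ball x \<delta>" unfolding p1_def using inb[of 0 0 0 dd] by simp
    have p2b: "p2 \<in> ball x \<delta>" unfolding p2_def using inb[of 0 0 c dd] by simp
    have p3b: "p3 \<in> ball x \<delta>" unfolding p3_def using inb[of 0 b c dd] by simp
    have yb: "y \<in> ball x \<delta>" using y by (simp add: dist_norm norm_minus_commute)
    have bnd_0: "\<And>y. y \<in> ball x \<delta> \<Longrightarrow> norm (D y (0,0,0,1) - D x (0,0,0,1)) \<le> e/4"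
      by (rule bnd) simp
    have bnd_1: "\<And>y. y \<in> ball x \<delta> \<Longrightarrow> norm (D y (0,0,1,0) - D x (0,0,1,0)) \<le> e/4"
      by (rule bnd) simp
    have bnd_2: "\<And>y. y \<in> ball x \<delta> \<Longrightarrow> norm (D y (0,1,0,0) - D x (0,1,0,0)) \<le> e/4"
      by (rule bnd) simp
    have bnd_3: "\<And>y. y \<in> ball x \<delta> \<Longrightarrow> norm (D y (1,0,0,0) - D x (1,0,0,0)) \<le> e/4"
      by (rule bnd) simp
    have s1: "norm (F p1 - F x - dd *\<^sub>R D x (0,0,0,1)) \<le> e/4 * \<bar>dd\<bar>"
      unfolding e1 by (rule seg_bound[OF derb bnd_0 xb p1b[unfolded e1]])
    have s2: "norm (F p2 - F p1 - c *\<^sub>R D x (0,0,1,0)) \<le> e/4 * \<bar>c\<bar>"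
      unfolding e2 by (rule seg_bound[OF derb bnd_1 p1b p2b[unfolded e2]])
    have s3: "norm (F p3 - F p2 - b *\<^sub>R D x (0,1,0,0)) \<le> e/4 * \<bar>b\<bar>"
      unfolding e3 by (rule seg_bound[OF derb bnd_2 p2b p3b[unfolded e3]])
    have s4: "norm (F y - F p3 - a *\<^sub>R D x (1,0,0,0)) \<le> e/4 * \<bar>a\<bar>"
      unfolding e4 by (rule seg_bound[OF derb bnd_3 p3b yb[unfolded e4]])
    have eq: "F y - F x - qlin D x (y - x) =
        (F y - F p3 - a *\<^sub>R D x (1,0,0,0)) + (F p3 - F p2 - b *\<^sub>R D x (0,1,0,0))
      + (F p2 - F p1 - c *\<^sub>R D x (0,0,1,0)) + (F p1 - F x - dd *\<^sub>R D x (0,0,0,1))"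
      unfolding qlin_def h fst_conv snd_conv by (rule L1)
    have "norm (F y - F x - qlin D x (y - x)) \<le> e/4 * \<bar>a\<bar> + e/4 * \<bar>b\<bar> + e/4 * \<bar>c\<bar> + e/4 * \<bar>dd\<bar>"
    proof -
      have tri: "norm (A + B + C + E) \<le> norm A + norm B + norm C + norm E" for A B C E :: 'b
        using norm_triangle_ineq[of "A + B + C" E] norm_triangle_ineq[of "A + B" C] norm_triangle_ineq[of A B]
        by linarith
      show ?thesis unfolding eq using tri[of "F y - F p3 - a *\<^sub>R D x (1,0,0,0)" "F p3 - F p2 - b *\<^sub>R D x (0,1,0,0)"
        "F p2 - F p1 - c *\<^sub>R D x (0,0,1,0)" "F p1 - F x - dd *\<^sub>R D x (0,0,0,1)"]
        by (rule order_trans) (intro add_mono s1 s2 s3 s4)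
    qed
    also have "\<dots> \<le> e * norm (y - x)"
    proof -
      have "\<bar>a\<bar> \<le> norm (y - x)" "\<bar>b\<bar> \<le> norm (y - x)" "\<bar>c\<bar> \<le> norm (y - x)" "\<bar>dd\<bar> \<le> norm (y - x)"
        unfolding nh by (auto intro!: real_le_rsqrt)
      then have "e/4 * \<bar>a\<bar> \<le> e/4 * norm (y - x)" "e/4 * \<bar>b\<bar> \<le> e/4 * norm (y - x)"
        "e/4 * \<bar>c\<bar> \<le> e/4 * norm (y - x)" "e/4 * \<bar>dd\<bar> \<le> e/4 * norm (y - x)"
        using e by (simp_all add: mult_left_mono)
      then show ?thesis by linarith
    qed
    finally show "norm (F y - F x - qlin D x (y - x)) \<le> e * norm (y - x)" .
  qed
qed




lemma unit_quat: "norm ((a,b,c,d)::quat) = 1 \<longleftrightarrow> a\<^sup>2 + b\<^sup>2 + c\<^sup>2 + d\<^sup>2 = 1"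
  by (simp add: norm_Pair add.assoc)

lemma qinv_unit: "norm q = 1 \<Longrightarrow> qinv q = qcnj q"
  by (simp add: qinv_def)

lemma norm_qcnj: "norm (qcnj q) = norm q"
  by (cases q) (simp add: norm_Pair)

lemma qinv_qcnj_unit: "norm q = 1 \<Longrightarrow> qinv (qcnj q) = q"
  by (cases q) (simp add: qinv_def norm_Pair)

lemma I1: assumes "norm g = 1" shows "qmult (qcnj g) (qmult g x) = x"
proof -
  obtain a b c d where g: "g = (a,b,c,d)" by (cases g) auto
  obtain x1 x2 x3 x4 where x: "x = (x1,x2,x3,x4)" by (cases x) auto
  have h: "a\<^sup>2 + b\<^sup>2 + c\<^sup>2 + d\<^sup>2 = 1" using assms g unit_quat by simp
  show ?thesis unfolding g x using h by simp algebra+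
qed

lemma I2: assumes "norm g = 1" shows "qmult g (qmult (qcnj g) x) = x"
proof -
  obtain a b c d where g: "g = (a,b,c,d)" by (cases g) auto
  obtain x1 x2 x3 x4 where x: "x = (x1,x2,x3,x4)" by (cases x) auto
  have h: "a\<^sup>2 + b\<^sup>2 + c\<^sup>2 + d\<^sup>2 = 1" using assms g unit_quat by simp
  show ?thesis unfolding g x using h by simp algebra+
qed

lemma I3: assumes "norm g = 1" shows "g \<bullet> qmult g x = fst x"
proof -
  obtain a b c d where g: "g = (a,b,c,d)" by (cases g) auto
  obtain x1 x2 x3 x4 where x: "x = (x1,x2,x3,x4)" by (cases x) auto
  have h: "a\<^sup>2 + b\<^sup>2 + c\<^sup>2 + d\<^sup>2 = 1" using assms g unit_quat by simp
  show ?thesis unfolding g x using h by (simp add: inner_Pair) algebra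
qed

lemma I4: assumes "norm f = 1"
  shows "qmult f (qcnj w - (2 * (f \<bullet> w)) *\<^sub>R qcnj f) = - qmult w (qcnj f)"
proof -
  obtain a b c d where g: "f = (a,b,c,d)" by (cases f) auto
  obtain x1 x2 x3 x4 where x: "w = (x1,x2,x3,x4)" by (cases w) auto
  have h: "a\<^sup>2 + b\<^sup>2 + c\<^sup>2 + d\<^sup>2 = 1" using assms g unit_quat by simp
  show ?thesis unfolding g x using h by (simp add: inner_Pair) algebra+
qed




definition Dqinv :: "quat \<Rightarrow> quat \<Rightarrow> quat" where
  "Dqinv q w = qcnj w - (2 * (q \<bullet> w)) *\<^sub>R qcnj q"

lemma qcnj_alt: "qcnj q = (fst q, - snd q)"
  by (cases q) auto

lemma qinv_alt: "qinv = (\<lambda>q. inverse (q \<bullet> q) *\<^sub>R (fst q, - snd q))"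
  by (rule ext) (simp add: qinv_def qcnj_alt power2_norm_eq_inner divide_inverse)

lemma qinv_deriv: assumes "norm q = 1" shows "(qinv has_derivative Dqinv q) (at q)"
proof -
  have qq: "q \<bullet> q = 1" using assms by (metis norm_eq_sqrt_inner real_sqrt_eq_1_iff)
  show ?thesis unfolding qinv_alt
    apply (rule derivative_eq_intros refl | simp add: qq)+
    apply (rule ext)
    apply (simp add: Dqinv_def qcnj_alt qq inner_commute algebra_simps)
    done
qed

lemma bounded_linear_Dqinv: "bounded_linear (Dqinv q)"
  unfolding linear_conv_bounded_linear[symmetric] Dqinv_def qcnj_alt
  by (rule linearI) (auto simp: inner_add_right algebra_simps)
 
definition curve :: "quat \<Rightarrow> quat \<Rightarrow> real \<Rightarrow> quat" where
  "curve g v t = inverse (sqrt (1 + t\<^sup>2 * (v \<bullet> v))) *\<^sub>R (g + t *\<^sub>R v)"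

lemma curve_norm: assumes "norm g = 1" "v \<bullet> g = 0" shows "norm (curve g v t) = 1"
proof -
  have gg: "g \<bullet> g = 1" using assms by (metis norm_eq_sqrt_inner real_sqrt_eq_1_iff)
  have pos: "1 + t\<^sup>2 * (v \<bullet> v) > 0" by (simp add: add_pos_nonneg)
  have "norm (g + t *\<^sub>R v) = sqrt (1 + t\<^sup>2 * (v \<bullet> v))"
    unfolding norm_eq_sqrt_inner using assms(2) gg
    by (simp add: inner_add_left inner_add_right inner_commute power2_eq_square algebra_simps)
  then show ?thesis unfolding curve_def using pos by simp
qed

lemma curve_0: "curve g v 0 = g" by (simp add: curve_def)

lemma curve_deriv: "(curve g v has_vector_derivative v) (at 0)"
proof -
  have "((\<lambda>t. inverse (sqrt (1 + t\<^sup>2 * (v \<bullet> v))) *\<^sub>R (g + t *\<^sub>R v)) has_vector_derivative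
     (inverse (sqrt (1 + 0\<^sup>2 * (v \<bullet> v))) *\<^sub>R (0 + 1 *\<^sub>R v) + 0 *\<^sub>R (g + 0 *\<^sub>R v))) (at 0)"
    unfolding has_vector_derivative_def
    apply (rule derivative_eq_intros refl | simp add: add_pos_nonneg)+
    done
  then show ?thesis unfolding curve_def[abs_def] by simp
qed




lemma chain_qinv:
  assumes DF: "(F has_derivative DF) (at g)" and nf: "norm (F g) = 1"
    and c: "(c has_vector_derivative v) (at 0)" and c0: "c 0 = g"
  shows "((\<lambda>t. qinv (F (c t))) has_vector_derivative Dqinv (F g) (DF v)) (at 0)"
proof -
  have c': "(c has_derivative (\<lambda>t. t *\<^sub>R v)) (at 0)" using c by (simp add: has_vector_derivative_def)
  have DF0: "(F has_derivative DF) (at (c 0))" using DF c0 by simp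
  have "((F \<circ> c) has_derivative (DF \<circ> (\<lambda>t. t *\<^sub>R v))) (at 0)"
    by (rule diff_chain_at[OF c' DF0])
  moreover have qd: "(qinv has_derivative Dqinv (F g)) (at ((F \<circ> c) 0))"
    using qinv_deriv[OF nf] c0 by simp
  ultimately have "((qinv \<circ> (F \<circ> c)) has_derivative (Dqinv (F g) \<circ> (DF \<circ> (\<lambda>t. t *\<^sub>R v)))) (at 0)"
    by (rule diff_chain_at)
  moreover have "(Dqinv (F g) \<circ> (DF \<circ> (\<lambda>t. t *\<^sub>R v))) = (\<lambda>t. t *\<^sub>R Dqinv (F g) (DF v))"
  proof -
    interpret l1: bounded_linear DF using DF by (rule has_derivative_bounded_linear)
    interpret l2: bounded_linear "Dqinv (F g)" by (rule bounded_linear_Dqinv)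
    show ?thesis by (rule ext) (simp add: l1.scaleR l2.scaleR)
  qed
  ultimately show ?thesis by (simp add: has_vector_derivative_def comp_def)
qed

lemma Omega_eq:
  assumes g: "norm g = 1" and f: "norm f = 1"
  shows "Omega (g, qinv f) (v1, Dqinv f w1) (v2, Dqinv f w2) =
    1 / sqrt 3 * (2/3 * (qmult (qcnj g) v1 \<bullet> (- qmult w2 (qcnj f)))
                - 2/3 * ((- qmult w1 (qcnj f)) \<bullet> qmult (qcnj g) v2))"
proof -
  have "qinv (qinv f) = f" using f by (simp add: qinv_unit qinv_qcnj_unit)
  then show ?thesis
    unfolding Omega_def su2_inner_def using g f
    by (simp add: qinv_unit norm_qcnj qinv_qcnj_unit Dqinv_def I4)
qed




lemma tangent_sub:
  assumes DF: "(F has_derivative DF) (at g)" and g: "g \<in> S3" and FS: "F ` S3 \<subseteq> S3"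
    and A: "A \<in> tangent_space (graph_inv F) (g, qinv (F g))"
  shows "\<exists>v. v \<bullet> g = 0 \<and> A = (v, Dqinv (F g) (DF v))"
proof -
  obtain \<gamma> e where e: "e > 0" and g0: "\<gamma> 0 = (g, qinv (F g))"
    and inL: "\<forall>t\<in>{-e<..<e}. \<gamma> t \<in> graph_inv F" and dg: "(\<gamma> has_vector_derivative A) (at 0)"
    using A unfolding tangent_space_def by blast
  define c where "c = (\<lambda>t. fst (\<gamma> t))"
  have cSs: "c t \<in> S3 \<and> snd (\<gamma> t) = qinv (F (c t))" if "t \<in> {-e<..<e}" for t
  proof -
    have "\<gamma> t \<in> (\<lambda>g. (g, qinv (F g))) ` S3" using inL that unfolding graph_inv_def by blast
    then obtain g' where "g' \<in> S3" "\<gamma> t = (g', qinv (F g'))" by blast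
    then show ?thesis by (simp add: c_def)
  qed
  have cS: "c t \<in> S3" and sndg: "snd (\<gamma> t) = qinv (F (c t))" if "t \<in> {-e<..<e}" for t
    using cSs[OF that] by auto
  have c0: "c 0 = g" using g0 by (simp add: c_def)
  have ng: "norm g = 1" using g by (simp add: S3_def)
  have nf: "norm (F g) = 1"
  proof -
    have "F g \<in> S3" using g FS by blast
    then show ?thesis by (simp add: S3_def)
  qed
  have cd: "(c has_vector_derivative fst A) (at 0)"
    using has_derivative_fst[OF dg[unfolded has_vector_derivative_def]]
    by (simp add: has_vector_derivative_def c_def)
  have sd: "((\<lambda>t. snd (\<gamma> t)) has_vector_derivative snd A) (at 0)"
    using has_derivative_snd[OF dg[unfolded has_vector_derivative_def]]
    by (simp add: has_vector_derivative_def)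
  have int0: "0 \<in> {-e<..<e}" using e by simp
  have "((\<lambda>t. qinv (F (c t))) has_vector_derivative Dqinv (F g) (DF (fst A))) (at 0)"
    by (rule chain_qinv[OF DF nf cd c0])
  then have "((\<lambda>t. snd (\<gamma> t)) has_vector_derivative Dqinv (F g) (DF (fst A))) (at 0)"
    by (rule has_vector_derivative_transform_within_open[OF _ open_greaterThanLessThan int0])
       (simp add: sndg)
  then have sA: "snd A = Dqinv (F g) (DF (fst A))"
    using sd vector_derivative_unique_at by blast
  have "((\<lambda>t. c t \<bullet> c t) has_derivative (\<lambda>h. c 0 \<bullet> (h *\<^sub>R fst A) + (h *\<^sub>R fst A) \<bullet> c 0)) (at 0)"
    using cd unfolding has_vector_derivative_def by (intro derivative_eq_intros) auto
  moreover have "((\<lambda>t. c t \<bullet> c t) has_derivative (\<lambda>h. 0)) (at 0)"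
  proof (rule has_derivative_transform_within_open[OF _ open_greaterThanLessThan int0])
    show "((\<lambda>t. 1::real) has_derivative (\<lambda>h. 0)) (at 0)" by simp
    fix t assume "t \<in> {-e<..<e}"
    then have "norm (c t) = 1" using cS by (simp add: S3_def)
    then show "1 = c t \<bullet> c t" by (metis norm_eq_sqrt_inner real_sqrt_eq_1_iff)
  qed
  ultimately have "(\<lambda>h. c 0 \<bullet> (h *\<^sub>R fst A) + (h *\<^sub>R fst A) \<bullet> c 0) = (\<lambda>h. 0)"
    by (rule has_derivative_unique)
  then have "c 0 \<bullet> (1 *\<^sub>R fst A) + (1 *\<^sub>R fst A) \<bullet> c 0 = 0" by metis
  then have "fst A \<bullet> g = 0" using c0 by (simp add: inner_commute)
  then show ?thesis using sA by (intro exI[of _ "fst A"]) (simp add: prod_eq_iff)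
qed

lemma tangent_sup:
  assumes DF: "(F has_derivative DF) (at g)" and g: "g \<in> S3" and FS: "F ` S3 \<subseteq> S3"
    and v: "v \<bullet> g = 0"
  shows "(v, Dqinv (F g) (DF v)) \<in> tangent_space (graph_inv F) (g, qinv (F g))"
proof -
  have ng: "norm g = 1" using g by (simp add: S3_def)
  have nf: "norm (F g) = 1"
  proof -
    have "F g \<in> S3" using g FS by blast
    then show ?thesis by (simp add: S3_def)
  qed
  have cS: "curve g v t \<in> S3" for t using curve_norm[OF ng v] by (simp add: S3_def)
  have d1: "((\<lambda>t. qinv (F (curve g v t))) has_vector_derivative Dqinv (F g) (DF v)) (at 0)"
    by (rule chain_qinv[OF DF nf curve_deriv curve_0])
  have "((\<lambda>t. (curve g v t, qinv (F (curve g v t)))) has_vector_derivative (v, Dqinv (F g) (DF v))) (at 0)"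
    using has_derivative_Pair[OF curve_deriv[of g v, unfolded has_vector_derivative_def]
        d1[unfolded has_vector_derivative_def]]
    by (simp add: has_vector_derivative_def)
  moreover have "\<forall>t\<in>{-1<..<1::real}. (curve g v t, qinv (F (curve g v t))) \<in> graph_inv F"
    using cS unfolding graph_inv_def by auto
  ultimately show ?thesis unfolding tangent_space_def
    by (intro CollectI exI[of _ "\<lambda>t. (curve g v t, qinv (F (curve g v t)))"] exI[of _ 1])
       (simp add: curve_0)
qed




theorem lemma4p1:
  fixes F :: "quat \<Rightarrow> quat" and U :: "quat set"
  assumes "S3 \<subseteq> U" and "smooth_on U F" and "F ` S3 \<subseteq> S3"
  shows "(\<forall>g\<in>S3. \<forall>x\<in>ImH. \<forall>y\<in>ImH. Mg F g x \<bullet> y = x \<bullet> Mg F g y)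
         \<longleftrightarrow> lagrangian (graph_inv F)"
proof -
  have oU: "open U" using assms(2) unfolding smooth_on_def by blast
  have der: "((\<lambda>t. F (y + t *\<^sub>R v)) has_vector_derivative ddiff F [v] y) (at 0)"
    if "y \<in> U" for y v
  proof -
    have "(\<lambda>t. ddiff F [] (y + t *\<^sub>R v)) differentiable (at 0)"
      using assms(2) that unfolding smooth_on_def by blast
    then have "(\<lambda>t. F (y + t *\<^sub>R v)) differentiable (at 0)" by simp
    then have "((\<lambda>t. F (y + t *\<^sub>R v)) has_vector_derivative vector_derivative (\<lambda>t. F (y + t *\<^sub>R v)) (at 0)) (at 0)"
      by (simp add: vector_derivative_works)
    moreover have "ddiff F [v] y = vector_derivative (\<lambda>t. F (y + t *\<^sub>R v)) (at 0)" by simp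
    ultimately show ?thesis by simp
  qed
  have cont: "continuous_on U (\<lambda>y. ddiff F [v] y)" for v
    using assms(2) unfolding smooth_on_def by blast
  define DF where "DF g = frechet_derivative F (at g)" for g
  have ng: "norm g = 1" if "g \<in> S3" for g using that by (simp add: S3_def)
  have nf: "norm (F g) = 1" if "g \<in> S3" for g
  proof -
    have "F g \<in> S3" using that assms(3) by blast
    then show ?thesis by (simp add: S3_def)
  qed
  have Fd: "(F has_derivative DF g) (at g)" if "g \<in> S3" for g
  proof -
    have "g \<in> U" using that assms(1) by blast
    then have "(F has_derivative qlin (\<lambda>y v. ddiff F [v] y) g) (at g)"
      by (rule frechet_quat[OF oU _ der cont])
    then have "F differentiable (at g)" unfolding differentiable_def by blast
    then show ?thesis unfolding DF_def by (simp add: frechet_derivative_works)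
  qed
  have Mg_eq: "Mg F g x = qmult (DF g (qmult g x)) (qcnj (F g))" if "g \<in> S3" for g x
    unfolding Mg_def DF_def using nf[OF that] by (simp add: qinv_unit)
  show ?thesis
  proof
    assume sym: "\<forall>g\<in>S3. \<forall>x\<in>ImH. \<forall>y\<in>ImH. Mg F g x \<bullet> y = x \<bullet> Mg F g y"
    show "lagrangian (graph_inv F)" unfolding lagrangian_def
    proof (intro ballI)
      fix p A B assume p: "p \<in> graph_inv F" and A: "A \<in> tangent_space (graph_inv F) p"
        and B: "B \<in> tangent_space (graph_inv F) p"
      obtain g where g: "g \<in> S3" and pe: "p = (g, qinv (F g))" using p unfolding graph_inv_def by blast
      obtain v1 where v1: "v1 \<bullet> g = 0" "A = (v1, Dqinv (F g) (DF g v1))"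
        using tangent_sub[OF Fd[OF g] g assms(3)] A pe by blast
      obtain v2 where v2: "v2 \<bullet> g = 0" "B = (v2, Dqinv (F g) (DF g v2))"
        using tangent_sub[OF Fd[OF g] g assms(3)] B pe by blast
      define x1 where "x1 = qmult (qcnj g) v1"
      define x2 where "x2 = qmult (qcnj g) v2"
      have gx1: "qmult g x1 = v1" unfolding x1_def by (rule I2[OF ng[OF g]])
      have gx2: "qmult g x2 = v2" unfolding x2_def by (rule I2[OF ng[OF g]])
      have x1I: "x1 \<in> ImH"
      proof -
        have "fst x1 = g \<bullet> qmult g x1" by (rule I3[OF ng[OF g], symmetric])
        also have "\<dots> = 0" using gx1 v1(1) by (simp add: inner_commute)
        finally show ?thesis by (simp add: ImH_def)
      qed
      have x2I: "x2 \<in> ImH"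
      proof -
        have "fst x2 = g \<bullet> qmult g x2" by (rule I3[OF ng[OF g], symmetric])
        also have "\<dots> = 0" using gx2 v2(1) by (simp add: inner_commute)
        finally show ?thesis by (simp add: ImH_def)
      qed
      have M1: "Mg F g x1 = qmult (DF g v1) (qcnj (F g))" using Mg_eq[OF g] gx1 by simp
      have M2: "Mg F g x2 = qmult (DF g v2) (qcnj (F g))" using Mg_eq[OF g] gx2 by simp
      have s: "Mg F g x1 \<bullet> x2 = x1 \<bullet> Mg F g x2" using sym g x1I x2I by blast
      have "Omega p A B = 1 / sqrt 3 * (2/3 * (x1 \<bullet> (- qmult (DF g v2) (qcnj (F g))))
                - 2/3 * ((- qmult (DF g v1) (qcnj (F g))) \<bullet> x2))"
        unfolding pe v1(2) v2(2) x1_def x2_def by (rule Omega_eq[OF ng[OF g] nf[OF g]])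
      also have "\<dots> = 0" using s unfolding M1 M2 by simp
      finally show "Omega p A B = 0" .
    qed
  next
    assume lag: "lagrangian (graph_inv F)"
    show "\<forall>g\<in>S3. \<forall>x\<in>ImH. \<forall>y\<in>ImH. Mg F g x \<bullet> y = x \<bullet> Mg F g y"
    proof (intro ballI)
      fix g x y assume g: "g \<in> S3" and x: "x \<in> ImH" and y: "y \<in> ImH"
      define v1 where "v1 = qmult g x"
      define v2 where "v2 = qmult g y"
      have v1g: "v1 \<bullet> g = 0" using I3[OF ng[OF g], of x] x unfolding v1_def ImH_def
        by (simp add: inner_commute)
      have v2g: "v2 \<bullet> g = 0" using I3[OF ng[OF g], of y] y unfolding v2_def ImH_def
        by (simp add: inner_commute)
      have pin: "(g, qinv (F g)) \<in> graph_inv F" using g unfolding graph_inv_def by blast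
      have A: "(v1, Dqinv (F g) (DF g v1)) \<in> tangent_space (graph_inv F) (g, qinv (F g))"
        by (rule tangent_sup[OF Fd[OF g] g assms(3) v1g])
      have B: "(v2, Dqinv (F g) (DF g v2)) \<in> tangent_space (graph_inv F) (g, qinv (F g))"
        by (rule tangent_sup[OF Fd[OF g] g assms(3) v2g])
      have "Omega (g, qinv (F g)) (v1, Dqinv (F g) (DF g v1)) (v2, Dqinv (F g) (DF g v2)) = 0"
        using lag pin A B unfolding lagrangian_def by blast
      moreover have "Omega (g, qinv (F g)) (v1, Dqinv (F g) (DF g v1)) (v2, Dqinv (F g) (DF g v2))
        = 1 / sqrt 3 * (2/3 * (qmult (qcnj g) v1 \<bullet> (- qmult (DF g v2) (qcnj (F g))))
                - 2/3 * ((- qmult (DF g v1) (qcnj (F g))) \<bullet> qmult (qcnj g) v2))"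
        by (rule Omega_eq[OF ng[OF g] nf[OF g]])
      moreover have "qmult (qcnj g) v1 = x" unfolding v1_def by (rule I1[OF ng[OF g]])
      moreover have "qmult (qcnj g) v2 = y" unfolding v2_def by (rule I1[OF ng[OF g]])
      moreover have "Mg F g x = qmult (DF g v1) (qcnj (F g))" unfolding v1_def by (rule Mg_eq[OF g])
      moreover have "Mg F g y = qmult (DF g v2) (qcnj (F g))" unfolding v2_def by (rule Mg_eq[OF g])
      ultimately show "Mg F g x \<bullet> y = x \<bullet> Mg F g y" by simp
    qed
  qed
qed


end
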